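(* Let $r=(r_1,\dots,r_n)$ be a permutation of $[n]$, let $f_r(C^{(r_a)},C^{(r_b)})=1$ if $a<b$ and $0$ if $a>b$, and let $E$ be the set of all ordered pairs of distinct classes. For every $\varepsilon>0$ there exists $\mathbf{p}=(p^{(1)},\dots,p^{(n)})\in(0,1)^n$ with $\sum_ip^{(i)}=1$ such that, with $f_u(C^{(i)},C^{(j)})=p^{(i)}/(p^{(i)}+p^{(j)})$, $$\sum_{e\in E}\big(f_r(e)-f_u(e)\big)^2<\varepsilon.$$
   Context: $C^{(1)},\dots,C^{(n)}$ are class labels; $f_r$ are the ranking graph weights and $f_u$ the situational expert graph weights generated by the categorical distribution $\mathbf{p}$. *)

theory Defs
  imports "HOL-Analysis.Analysis"
begin

text \<open>A permutation r of the classes is a bijection of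
  {..<n}; r a is the class at rank position a.\<close>

definition rank_pos :: "nat \<Rightarrow> (nat \<Rightarrow> nat) \<Rightarrow> nat \<Rightarrow> nat" where
  "rank_pos n r i = (THE a. a < n \<and> r a = i)"

definition ranking_weight :: "nat \<Rightarrow> (nat \<Rightarrow> nat) \<Rightarrow> nat \<Rightarrow> nat \<Rightarrow> real" where
  "ranking_weight n r i j = (if rank_pos n r i < rank_pos n r j then 1 else 0)"

definition expert_weight :: "(nat \<Rightarrow> real) \<Rightarrow> nat \<Rightarrow> nat \<Rightarrow> real" where
  "expert_weight p i j = p i / (p i + p j)"

definition edge_set :: "nat \<Rightarrow> (nat \<times> nat) set" where
  "edge_set n = {(i, j). i < n \<and> j < n \<and> i \<noteq> j}"

end

theory Submission
  imports Defs
begin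

lemma key_bound:
  fixes t :: real and x y :: nat
  assumes t: "0 < t" "t < 1" and xy: "x \<noteq> y"
  shows "\<bar>(if x < y then 1 else 0) - t^x / (t^x + t^y)\<bar> \<le> t"
proof (cases "x < y")
  case True
  obtain d where d: "y = x + Suc d" using less_imp_Suc_add[OF True] by auto
  have px: "t^x > 0" using t by simp
  have py: "t^y > 0" using t by simp
  have "1 - t^x/(t^x+t^y) = t^y/(t^x+t^y)" using px py by (simp add: field_simps)
  also have "\<dots> \<le> t^y / t^x" using px py by (intro divide_left_mono) auto
  also have "\<dots> = t^(Suc d)" using px d by (simp add: power_add)
  also have "\<dots> \<le> t" using t by (simp add: power_le_one mult_left_le)
  finally have "1 - t^x/(t^x+t^y) \<le> t" .
  moreover have "t^x/(t^x+t^y) \<le> 1" using px py by simp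
  ultimately show ?thesis using True by simp
next
  case False
  then have "y < x" using xy by simp
  then obtain d where d: "x = y + Suc d" using less_imp_Suc_add by fastforce
  have px: "t^x > 0" using t by simp
  have py: "t^y > 0" using t by simp
  have "t^x/(t^x+t^y) \<le> t^x / t^y" using px py by (intro divide_left_mono) auto
  also have "\<dots> = t^(Suc d)" using py d by (simp add: power_add)
  also have "\<dots> \<le> t" using t by (simp add: power_le_one mult_left_le)
  finally show ?thesis using False px py by simp
qed

theorem lemma7:
  fixes n :: nat and r :: "nat \<Rightarrow> nat" and \<epsilon> :: real
  assumes "n \<ge> 2" and "bij_betw r {..<n} {..<n}"
    and "\<epsilon> > 0"
  shows "\<exists>p :: nat \<Rightarrow> real.
           (\<forall>i<n. 0 < p i \<and> p i < 1) \<and> (\<Sum>i<n. p i) = 1 \<and>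
           (\<Sum>e\<in>edge_set n. (ranking_weight n r (fst e) (snd e)
                                 - expert_weight p (fst e) (snd e))^2) < \<epsilon>"
proof -
  define s where "s = rank_pos n r"
  have s: "s i < n \<and> r (s i) = i" if "i < n" for i
  proof -
    have inj: "inj_on r {..<n}" and img: "r ` {..<n} = {..<n}"
      using assms(2) unfolding bij_betw_def by auto
    from img that obtain a where a: "a < n" "r a = i" by (metis imageE lessThan_iff)
    have "\<exists>!a. a < n \<and> r a = i"
    proof (rule ex1I[of _ a])
      show "a < n \<and> r a = i" using a by simp
      fix b assume "b < n \<and> r b = i"
      then show "b = a" using a inj unfolding inj_on_def by auto
    qed
    then show ?thesis unfolding s_def rank_pos_def by (rule theI')
  qed
  have sinj: "s i \<noteq> s j" if "i < n" "j < n" "i \<noteq> j" for i j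
    using s[OF that(1)] s[OF that(2)] that(3) by metis
  define t :: real where "t = min (1/2) (\<epsilon> / (real n * real n + 1))"
  have pos0: "real n * real n + 1 > 0" by (intro add_nonneg_pos) auto
  have t: "0 < t" "t < 1" using assms(3) pos0 unfolding t_def by auto
  have tn: "t * (real n * real n + 1) \<le> \<epsilon>"
  proof -
    have pos: "real n * real n + 1 > 0" by (rule pos0)
    have "t \<le> \<epsilon> / (real n * real n + 1)" unfolding t_def by simp
    then show ?thesis using pos by (simp add: pos_le_divide_eq)
  qed
  define Z where "Z = (\<Sum>i<n. t ^ s i)"
  have Zp: "Z > 0" unfolding Z_def using t assms(1)
    by (intro sum_pos) (auto simp: lessThan_empty_iff)
  define p where "p i = t ^ s i / Z" for i
  have sum1: "(\<Sum>i<n. p i) = 1" unfolding p_def using Zp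
    by (simp add: sum_divide_distrib[symmetric] Z_def)
  have plt: "0 < p i \<and> p i < 1" if "i < n" for i
  proof -
    obtain j where j: "j < n" "j \<noteq> i" using assms(1) that
    proof (cases "i = 0")
      case True then show ?thesis using that[of 1] assms(1) by auto
    next
      case False then show ?thesis using that[of 0] assms(1) by auto
    qed
    have "t ^ s i + t ^ s j \<le> Z" unfolding Z_def
      using sum_mono2[of "{..<n}" "{i,j}" "\<lambda>k. t ^ s k"] t that j by auto
    then have "t ^ s i < Z" using t by (smt (verit) zero_less_power)
    then show ?thesis unfolding p_def using Zp t by simp
  qed
  have term_bound: "(ranking_weight n r (fst e) (snd e) - expert_weight p (fst e) (snd e))^2 \<le> t"
    if he: "e \<in> edge_set n" for e
  proof -
    obtain i j where e: "e = (i, j)" "i < n" "j < n" "i \<noteq> j"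
      using he unfolding edge_set_def by auto
    have ew: "expert_weight p i j = t ^ s i / (t ^ s i + t ^ s j)"
      unfolding expert_weight_def p_def using Zp by (simp add: add_divide_distrib[symmetric])
    have "\<bar>ranking_weight n r i j - expert_weight p i j\<bar> \<le> t"
      unfolding ew ranking_weight_def s_def[symmetric]
      using key_bound[OF t sinj[OF e(2-4)]] by simp
    then have "\<bar>ranking_weight n r i j - expert_weight p i j\<bar>^2 \<le> t^2"
      by (rule power_mono) simp_all
    also have "\<dots> \<le> t" using t by (simp add: power2_eq_square mult_left_le)
    finally show ?thesis using e by simp
  qed
  have fin: "finite (edge_set n)" and card: "card (edge_set n) \<le> n * n"
  proof -
    have sub: "edge_set n \<subseteq> {..<n} \<times> {..<n}" unfolding edge_set_def by auto
    show "finite (edge_set n)" using finite_subset[OF sub] by simp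
    show "card (edge_set n) \<le> n * n" using card_mono[OF _ sub] by simp
  qed
  have "(\<Sum>e\<in>edge_set n. (ranking_weight n r (fst e) (snd e)
                                 - expert_weight p (fst e) (snd e))^2) \<le> (\<Sum>e\<in>edge_set n. t)"
    by (rule sum_mono) (rule term_bound)
  also have "\<dots> = real (card (edge_set n)) * t" by simp
  also have "\<dots> \<le> real n * real n * t"
  proof -
    have "real (card (edge_set n)) \<le> real n * real n"
      using card by (metis of_nat_le_iff of_nat_mult)
    then show ?thesis using t by (intro mult_right_mono) auto
  qed
  also have "\<dots> < \<epsilon>" using tn t by (simp add: algebra_simps)
  finally show ?thesis using sum1 plt by blast
qed

end
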